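(* Let $q$ be a prime power, let $p\ge2$ be an integer, and let $1\le d<p$. For every function $f:\mathbb{F}_q^n\to[0,\infty)$, $$\sum_{\substack{(v_1,\dots,v_p)\in(\mathbb{F}_q^n)^p\\ \mathrm{rank}[v_1,\dots,v_p]=d}}\ \prod_{j=1}^pf(v_j)\le\binom{p}{d}\sum_{m=0}^{p-d}\binom{p-d}{m}(q^d-1)^{p-d-m}q^{nd}\,f(0)^m\,\|f\|_1^{d-1}\,\|f\|_{p-d-m+1}^{p-d-m+1}.$$
   Context: The sum is over ordered $p$-tuples whose linear span has dimension exactly $d$ ($[v_1,\dots,v_p]$ is the $n\times p$ matrix with these columns). For $f:\mathbb{F}_q^n\to\mathbb{R}$ and $r\in(0,\infty)$, $\|f\|_r=\big(q^{-n}\sum_{x\in\mathbb{F}_q^n}|f(x)|^r\big)^{1/r}$. *)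

theory Defs
  imports "HOL-Analysis.Analysis" "HOL-Library.FuncSet"
begin

definition lrnorm :: "('a::{finite,field} ^ 'n \<Rightarrow> real) \<Rightarrow> real \<Rightarrow> real" where
  "lrnorm f r = (inverse (real CARD('a) ^ CARD('n)) * (\<Sum>x\<in>UNIV. \<bar>f x\<bar> powr r)) powr (1 / r)"

definition tuple_rank :: "nat \<Rightarrow> (nat \<Rightarrow> 'a::field ^ 'n) \<Rightarrow> nat" where
  "tuple_rank p v = vec.dim (v ` {..<p})"

end

theory Submission
  imports Defs
begin

lemma power_mean_nat:
  fixes x :: "'b \<Rightarrow> real"
  assumes "finite I" "\<And>i. i\<in>I \<Longrightarrow> x i \<ge> 0" "r \<ge> 1"
  shows "(\<Sum>i\<in>I. x i)^r \<le> real (card I)^(r-1) * (\<Sum>i\<in>I. x i ^ r)"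
proof (cases "I = {}")
  case True then show ?thesis using assms by (simp add: power_0_left)
next
  case False
  define N where "N = real (card I)"
  have N: "N > 0" using False assms by (simp add: N_def card_gt_0_iff)
  have conv: "convex_on {0..} (\<lambda>t::real. t^r)"
  proof (cases "even r")
    case True then show ?thesis using convex_power_even convex_on_subset by blast
  next
    case False then show ?thesis using convex_power_odd by blast
  qed
  have "(\<Sum>i\<in>I. (1/N) *\<^sub>R x i)^r \<le> (\<Sum>i\<in>I. (1/N) * x i ^ r)"
    using convex_on_sum[OF assms(1) False conv, of "\<lambda>_. 1/N" x] N assms(2)
    by (simp add: N_def)
  hence "((\<Sum>i\<in>I. x i)/N)^r \<le> (\<Sum>i\<in>I. x i ^ r)/N"
    by (simp add: sum_divide_distrib[symmetric] sum_distrib_left[symmetric])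
  hence "(\<Sum>i\<in>I. x i)^r \<le> N^r * ((\<Sum>i\<in>I. x i ^ r)/N)"
    using N by (simp add: power_divide field_simps)
  also have "N^r * ((\<Sum>i\<in>I. x i ^ r)/N) = N^(r-1) * (\<Sum>i\<in>I. x i ^ r)"
    using N assms(3) by (simp add: field_simps power_eq_if)
  finally show ?thesis by (simp add: N_def)
qed

lemma young_nat:
  fixes a b :: real
  assumes "a \<ge> 0" "b \<ge> 0"
  shows "a * b^r \<le> (a^(r+1) + real r * b^(r+1)) / (r+1)"
proof (cases "r = 0")
  case True then show ?thesis by simp
next
  case False
  have "a * b^r \<le> a powr (real r + 1) / (real r + 1) + (b^r) powr ((real r + 1)/r) / ((real r + 1)/r)"
  proof (rule Youngs_inequality)
    show "1 / (real r + 1) + 1 / ((real r + 1) / real r) = 1" using False by (simp add: field_simps)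
  qed (use False assms in auto)
  also have "a powr (real r + 1) = a^(r+1)"
  proof (cases "a = 0")
    case True then show ?thesis by simp
  next
    case False
    hence "a powr (real (r+1)) = a^(r+1)" using assms by (intro powr_realpow) simp
    then show ?thesis by (simp add: add.commute)
  qed
  also have "(b^r) powr ((real r + 1)/r) = b^(r+1)"
  proof (cases "b = 0")
    case True then show ?thesis using False by simp
  next
    case bnz: False
    hence "b > 0" using assms by simp
    hence "(b^r) powr ((real r + 1)/r) = b powr (real r * ((real r + 1)/r))"
      by (simp add: powr_powr powr_realpow[symmetric])
    also have "\<dots> = b powr (real (r+1))" using False by (simp add: add.commute)
    also have "\<dots> = b^(r+1)" using \<open>b>0\<close> by (rule powr_realpow)
    finally show ?thesis .
  qed
  also have "a^(r+1) / (real r + 1) + b^(r+1) / ((real r + 1)/r) = (a^(r+1) + real r * b^(r+1)) / (r+1)"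
  proof -
    have "\<And>x y::real. x / (real r + 1) + y / ((real r + 1)/r) = (x + real r * y) / (real r + 1)"
      using False by (simp add: divide_simps)
    then show ?thesis by simp
  qed
  finally show ?thesis .
qed

lemma shift_sum:
  fixes h :: "'a::{finite,field}^'n \<Rightarrow> real" and a :: 'a
  assumes "a \<noteq> 0"
  shows "(\<Sum>y\<in>UNIV. h (a *s y + L)) = (\<Sum>y\<in>UNIV. h y)"
proof (rule sum.reindex_bij_witness[where i = "\<lambda>y. inverse a *s (y - L)" and j = "\<lambda>y. a *s y + L"])
  fix y :: "'a^'n"
  show "inverse a *s (a *s y + L - L) = y" using assms by (simp add: vector_smult_assoc)
  show "a *s (inverse a *s (y - L)) + L = y" using assms by (simp add: vector_smult_assoc)
qed auto

lemma shift_young: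
  fixes f :: "'a::{finite,field}^'n \<Rightarrow> real" and a :: 'a
  assumes "a \<noteq> 0" "\<And>x. f x \<ge> 0"
  shows "(\<Sum>y\<in>UNIV. f y * f (a *s y + L) ^ r) \<le> (\<Sum>x\<in>UNIV. f x ^ (r+1))"
proof -
  have "(\<Sum>y\<in>UNIV. f y * f (a *s y + L) ^ r)
      \<le> (\<Sum>y\<in>UNIV. (f y ^ (r+1) + real r * f (a *s y + L) ^ (r+1)) / (r+1))"
    by (rule sum_mono) (rule young_nat, use assms in auto)
  also have "\<dots> = ((\<Sum>y\<in>UNIV. f y ^ (r+1)) + real r * (\<Sum>y\<in>UNIV. f (a *s y + L) ^ (r+1))) / (r+1)"
    by (simp add: sum_divide_distrib[symmetric] sum.distrib sum_distrib_left)
  also have "(\<Sum>y\<in>UNIV. f (a *s y + L) ^ (r+1)) = (\<Sum>y\<in>UNIV. f y ^ (r+1))"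
    using shift_sum[OF assms(1), of "\<lambda>y. f y ^ (r+1)"] by simp
  also have "((\<Sum>y\<in>UNIV. f y ^ (r+1)) + real r * (\<Sum>y\<in>UNIV. f y ^ (r+1))) / (r+1) = (\<Sum>x\<in>UNIV. f x ^ (r+1))"
    by (simp add: field_simps)
  finally show ?thesis .
qed

lemma core:
  fixes f :: "'a::{finite,field}^'n \<Rightarrow> real" and S :: "nat set" and c :: "nat \<Rightarrow> 'a"
  assumes f0: "\<And>x. f x \<ge> 0" and fin: "finite S" and i0: "i0 \<in> S" and ci0: "c i0 \<noteq> 0"
  shows "(\<Sum>u\<in>PiE S (\<lambda>_. UNIV). (\<Prod>i\<in>S. f (u i)) * f (\<Sum>i\<in>S. c i *s u i) ^ r)
     \<le> (\<Sum>x\<in>UNIV. f x) ^ (card S - 1) * (\<Sum>x\<in>UNIV. f x ^ (r+1))"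
proof -
  define S' where "S' = S - {i0}"
  have S: "S = insert i0 S'" and i0S': "i0 \<notin> S'" and finS': "finite S'" using i0 fin by (auto simp: S'_def)
  define G where "G = (\<Sum>x\<in>UNIV. f x ^ (r+1))"
  define H where "H = (\<lambda>u. (\<Prod>i\<in>S. f (u i)) * f (\<Sum>i\<in>S. c i *s u i) ^ r)"
  have "(\<Sum>u\<in>PiE S (\<lambda>_. UNIV). H u) = (\<Sum>yg\<in>UNIV \<times> PiE S' (\<lambda>_. UNIV). H ((\<lambda>(y, g). g(i0 := y)) yg))"
    unfolding S PiE_insert_eq
    using sum.reindex[OF inj_combinator[OF i0S', of "\<lambda>_. UNIV"], of H] by (simp add: o_def)
  also have "\<dots> = (\<Sum>y\<in>UNIV. \<Sum>g\<in>PiE S' (\<lambda>_. UNIV). H (g(i0 := y)))"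
    by (simp add: sum.cartesian_product case_prod_unfold)
  also have "\<dots> = (\<Sum>g\<in>PiE S' (\<lambda>_. UNIV). \<Sum>y\<in>UNIV. H (g(i0 := y)))"
    by (rule sum.swap)
  also have "\<dots> = (\<Sum>g\<in>PiE S' (\<lambda>_. UNIV). (\<Prod>i\<in>S'. f (g i)) *
                    (\<Sum>y\<in>UNIV. f y * f (c i0 *s y + (\<Sum>i\<in>S'. c i *s g i)) ^ r))"
  proof (rule sum.cong[OF refl])
    fix g :: "nat \<Rightarrow> 'a^'n" assume g: "g \<in> PiE S' (\<lambda>_. UNIV)"
    have e1: "(\<Prod>i\<in>S. f ((g(i0 := y)) i)) = f y * (\<Prod>i\<in>S'. f (g i))" for y :: "'a^'n"
    proof -
      have "(\<Prod>i\<in>S'. f ((g(i0:=y)) i)) = (\<Prod>i\<in>S'. f (g i))" by (rule prod.cong) (use i0S' in auto)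
      then show ?thesis unfolding S using i0S' finS' by simp
    qed
    have e2: "(\<Sum>i\<in>S. c i *s (g(i0 := y)) i) = c i0 *s y + (\<Sum>i\<in>S'. c i *s g i)" for y :: "'a^'n"
    proof -
      have "(\<Sum>i\<in>S'. c i *s (g(i0:=y)) i) = (\<Sum>i\<in>S'. c i *s g i)" by (rule sum.cong) (use i0S' in auto)
      then show ?thesis unfolding S using i0S' finS' by simp
    qed
    show "(\<Sum>y\<in>UNIV. H (g(i0 := y))) = (\<Prod>i\<in>S'. f (g i)) *
                    (\<Sum>y\<in>UNIV. f y * f (c i0 *s y + (\<Sum>i\<in>S'. c i *s g i)) ^ r)"
      unfolding H_def e1 e2 by (simp add: sum_distrib_left mult_ac)
  qed
  also have "\<dots> \<le> (\<Sum>g\<in>PiE S' (\<lambda>_. UNIV). (\<Prod>i\<in>S'. f (g i)) * G)"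
    by (intro sum_mono mult_left_mono prod_nonneg)
       (use f0 ci0 shift_young[OF ci0 f0] in \<open>auto simp: G_def\<close>)
  also have "\<dots> = (\<Prod>i\<in>S'. \<Sum>x\<in>UNIV. f x) * G"
  proof -
    have "(\<Sum>g\<in>PiE S' (\<lambda>_. UNIV). \<Prod>i\<in>S'. f (g i)) = (\<Prod>i\<in>S'. \<Sum>y\<in>UNIV. f y)"
      using prod_sum_PiE[OF finS', of "\<lambda>_. UNIV" "\<lambda>_ y. f y"] by simp
    then show ?thesis by (simp add: sum_distrib_right[symmetric])
  qed
  also have "\<dots> = (\<Sum>x\<in>UNIV. f x) ^ (card S - 1) * G"
    using fin i0 by (simp add: S'_def card_Diff_singleton)
  finally show ?thesis unfolding H_def G_def .
qed

lemma span_sub: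
  fixes u :: "nat \<Rightarrow> 'a::field^'n"
  assumes "finite S"
  shows "vec.span (u ` S) \<subseteq> range (\<lambda>c. \<Sum>i\<in>S. c i *s u i)"
proof (rule vec.span_minimal)
  show "u ` S \<subseteq> range (\<lambda>c. \<Sum>i\<in>S. c i *s u i)"
  proof
    fix x assume "x \<in> u ` S"
    then obtain i where i: "i \<in> S" "x = u i" by auto
    have "(\<Sum>j\<in>S. (\<lambda>j. if j = i then 1 else 0) j *s u j) = (\<Sum>j\<in>S. if j = i then u j else 0)"
      by (rule sum.cong) auto
    also have "\<dots> = u i" using i assms by simp
    finally show "x \<in> range (\<lambda>c. \<Sum>i\<in>S. c i *s u i)" using i by (intro range_eqI[where x="\<lambda>j. if j = i then 1 else 0"]) simp
  qed
  show "vec.subspace (range (\<lambda>c. \<Sum>i\<in>S. c i *s u i))"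
    unfolding vec.subspace_def
  proof (intro conjI ballI allI)
    show "0 \<in> range (\<lambda>c. \<Sum>i\<in>S. c i *s u i)"
      by (rule range_eqI[where x = "\<lambda>_. 0"]) simp
  next
    fix x y assume "x \<in> range (\<lambda>c. \<Sum>i\<in>S. c i *s u i)" "y \<in> range (\<lambda>c. \<Sum>i\<in>S. c i *s u i)"
    then obtain c1 c2 where "x = (\<Sum>i\<in>S. c1 i *s u i)" "y = (\<Sum>i\<in>S. c2 i *s u i)" by auto
    then have "x + y = (\<Sum>i\<in>S. (c1 i + c2 i) *s u i)"
      by (simp add: vector_sadd_rdistrib sum.distrib)
    then show "x + y \<in> range (\<lambda>c. \<Sum>i\<in>S. c i *s u i)" by (intro range_eqI)
  next
    fix k x assume "x \<in> range (\<lambda>c. \<Sum>i\<in>S. c i *s u i)"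
    then obtain c1 where "x = (\<Sum>i\<in>S. c1 i *s u i)" by auto
    then have "k *s x = (\<Sum>i\<in>S. (k * c1 i) *s u i)"
      by (simp add: vec.scale_sum_right vector_smult_assoc)
    then show "k *s x \<in> range (\<lambda>c. \<Sum>i\<in>S. c i *s u i)" by (intro range_eqI)
  qed
qed

lemma factor:
  fixes f :: "'a::{finite,field}^'n \<Rightarrow> real"
  assumes f0: "\<And>x. f x \<ge> 0" and Sp: "S \<subseteq> {..<p}"
  shows "(\<Sum>v\<in>{v\<in>PiE {..<p} (\<lambda>_. UNIV). \<forall>j<p. v j \<in> vec.span (v ` S)}. \<Prod>j<p. f (v j))
   \<le> (\<Sum>u\<in>PiE S (\<lambda>_. UNIV). (\<Prod>i\<in>S. f (u i)) * (\<Sum>w\<in>vec.span (u ` S). f w) ^ (p - card S))"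
proof -
  define T where "T = {..<p} - S"
  have finS: "finite S" using Sp finite_subset by blast
  have finT: "finite T" by (simp add: T_def)
  have cardT: "card T = p - card S" using Sp finS by (simp add: T_def card_Diff_subset)
  have ST: "{..<p} = S \<union> T" "S \<inter> T = {}" using Sp by (auto simp: T_def)
  have finspan: "finite (vec.span X)" for X :: "('a^'n) set" by (rule finite_subset[OF subset_UNIV]) simp
  define merge :: "(nat \<Rightarrow> 'a^'n) \<times> (nat \<Rightarrow> 'a^'n) \<Rightarrow> nat \<Rightarrow> 'a^'n"
    where "merge = (\<lambda>(u, z) j. if j \<in> S then u j else z j)"
  define M :: "((nat \<Rightarrow> 'a^'n) \<times> (nat \<Rightarrow> 'a^'n)) set" where "M = (SIGMA u:PiE S (\<lambda>_. UNIV). PiE T (\<lambda>_. vec.span (u ` S)))"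
  define A :: "(nat \<Rightarrow> 'a^'n) set" where "A = {v\<in>PiE {..<p} (\<lambda>_. UNIV). \<forall>j<p. v j \<in> vec.span (v ` S)}"
  define g where "g = (\<lambda>v. \<Prod>j<p. f (v j))"
  have finM: "finite M" unfolding M_def
    using finS finT finspan by (intro finite_SigmaI finite_PiE) auto
  have sub: "A \<subseteq> merge ` M"
  proof
    fix v assume v: "v \<in> A"
    have img: "restrict v S ` S = v ` S" by auto
    have "restrict v T \<in> PiE T (\<lambda>_. vec.span (restrict v S ` S))"
      using v unfolding img by (auto simp: A_def T_def)
    then have inM: "(restrict v S, restrict v T) \<in> M" by (simp add: M_def)
    have "v = merge (restrict v S, restrict v T)"
    proof
      fix j show "v j = merge (restrict v S, restrict v T) j"
      proof (cases "j < p")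
        case True then show ?thesis using ST by (auto simp: merge_def)
      next
        case False
        have jS: "j \<notin> S" using Sp False by auto
        have jT: "j \<notin> T" using False by (simp add: T_def)
        have "v \<in> PiE {..<p} (\<lambda>_. UNIV)" using v by (simp add: A_def)
        then have "v j = undefined" using False by (meson PiE_arb lessThan_iff)
        then show ?thesis using jS jT by (simp add: merge_def)
      qed
    qed
    with inM show "v \<in> merge ` M" by blast
  qed
  have "(\<Sum>v\<in>A. g v) \<le> (\<Sum>v\<in>merge ` M. g v)"
    by (rule sum_mono2) (use finM sub f0 in \<open>auto simp: g_def intro: prod_nonneg\<close>)
  also have "\<dots> \<le> (\<Sum>x\<in>M. (g \<circ> merge) x)"
    by (rule sum_image_le) (use finM f0 in \<open>auto simp: g_def intro: prod_nonneg\<close>)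
  also have "\<dots> = (\<Sum>u::nat\<Rightarrow>'a^'n\<in>PiE S (\<lambda>_. UNIV). \<Sum>z\<in>PiE T (\<lambda>_. vec.span (u ` S)). g (merge (u, z)))"
    unfolding M_def by (subst sum.Sigma) (auto intro!: finite_PiE finS finT finspan)
  also have "\<dots> = (\<Sum>u\<in>PiE S (\<lambda>_. UNIV). (\<Prod>i\<in>S. f (u i)) * (\<Sum>w\<in>vec.span (u ` S). f w) ^ (p - card S))"
  proof (rule sum.cong[OF refl])
    fix u :: "nat \<Rightarrow> 'a^'n" assume u: "u \<in> PiE S (\<lambda>_. UNIV)"
    have "g (merge (u, z)) = (\<Prod>i\<in>S. f (u i)) * (\<Prod>j\<in>T. f (z j))" for z :: "nat \<Rightarrow> 'a^'n"
    proof -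
      have "g (merge (u, z)) = (\<Prod>j\<in>S. f (merge (u, z) j)) * (\<Prod>j\<in>T. f (merge (u, z) j))"
        unfolding g_def ST(1) by (rule prod.union_disjoint) (use finS finT ST in auto)
      also have "(\<Prod>j\<in>S. f (merge (u, z) j)) = (\<Prod>i\<in>S. f (u i))"
        by (rule prod.cong) (auto simp: merge_def)
      also have "(\<Prod>j\<in>T. f (merge (u, z) j)) = (\<Prod>j\<in>T. f (z j))"
        by (rule prod.cong) (auto simp: merge_def T_def)
      finally show ?thesis .
    qed
    then have "(\<Sum>z\<in>PiE T (\<lambda>_. vec.span (u ` S)). g (merge (u, z)))
        = (\<Prod>i\<in>S. f (u i)) * (\<Sum>z\<in>PiE T (\<lambda>_. vec.span (u ` S)). \<Prod>j\<in>T. f (z j))"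
      by (simp add: sum_distrib_left)
    also have "(\<Sum>z\<in>PiE T (\<lambda>_. vec.span (u ` S)). \<Prod>j\<in>T. f (z j)) = (\<Prod>j\<in>T. \<Sum>w\<in>vec.span (u ` S). f w)"
      using prod_sum_PiE[OF finT, of "\<lambda>_. vec.span (u ` S)" "\<lambda>_ w. f w"] finspan by simp
    also have "\<dots> = (\<Sum>w\<in>vec.span (u ` S). f w) ^ (p - card S)" using cardT by simp
    finally show "(\<Sum>z\<in>PiE T (\<lambda>_. vec.span (u ` S)). g (merge (u, z))) =
          (\<Prod>i\<in>S. f (u i)) * (\<Sum>w\<in>vec.span (u ` S). f w) ^ (p - card S)" .
  qed
  finally show ?thesis unfolding A_def g_def .
qed

lemma perS:
  fixes f :: "'a::{finite,field}^'n \<Rightarrow> real" and S :: "nat set"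
  assumes f0: "\<And>x. f x \<ge> 0" and finS: "finite S" and cS: "card S = d" and d1: "d \<ge> 1"
  shows "(\<Sum>u\<in>PiE S (\<lambda>_. UNIV). (\<Prod>i\<in>S. f (u i)) * (\<Sum>w\<in>vec.span (u ` S). f w) ^ k)
   \<le> (\<Sum>m=0..k. real (k choose m) * (real CARD('a) ^ d - 1) ^ (k - m) * f 0 ^ m
         * (\<Sum>x\<in>UNIV. f x) ^ (d - 1) * (\<Sum>x\<in>UNIV. f x ^ (k - m + 1)))"
proof -
  define C :: "(nat \<Rightarrow> 'a) set" where "C = PiE S (\<lambda>_. UNIV)"
  define z :: "nat \<Rightarrow> 'a" where "z = restrict (\<lambda>_. 0) S"
  define C0 where "C0 = C - {z}"
  define Lin :: "(nat \<Rightarrow> 'a^'n) \<Rightarrow> (nat \<Rightarrow> 'a) \<Rightarrow> 'a^'n" where "Lin = (\<lambda>u c. \<Sum>i\<in>S. c i *s u i)"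
  define X where "X = (\<lambda>u. \<Sum>c\<in>C0. f (Lin u c))"
  define F where "F = (\<Sum>x\<in>UNIV. f x)"
  define G where "G = (\<lambda>r. \<Sum>x\<in>UNIV. f x ^ r)"
  define N where "N = real CARD('a) ^ d - 1"
  define P where "P = (\<lambda>u::nat \<Rightarrow> 'a^'n. \<Prod>i\<in>S. f (u i))"
  have P0: "P u \<ge> 0" for u using f0 by (simp add: P_def prod_nonneg)
  have finC: "finite C" unfolding C_def using finS by (intro finite_PiE) auto
  have finC0: "finite C0" using finC by (simp add: C0_def)
  have zC: "z \<in> C" by (simp add: z_def C_def)
  have cardC: "card C = CARD('a) ^ d" unfolding C_def using finS cS by (simp add: card_PiE)
  have q1: "CARD('a) ^ d \<ge> 1" by (simp add: Suc_leI)
  have cardC0: "real (card C0) = N"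
    using zC finC cardC q1 by (simp add: C0_def N_def card_Diff_singleton of_nat_diff)
  have N0: "N \<ge> 0" using cardC0 by (metis of_nat_0_le_iff)
  have finspan: "finite (vec.span Y)" for Y :: "('a^'n) set" by (rule finite_subset[OF subset_UNIV]) simp
  have X0: "X u \<ge> 0" for u using f0 by (simp add: X_def sum_nonneg)
  have step1: "(\<Sum>w\<in>vec.span (u ` S). f w) \<le> f 0 + X u" for u :: "nat \<Rightarrow> 'a^'n"
  proof -
    have "(\<Sum>w\<in>vec.span (u ` S). f w) = f 0 + (\<Sum>w\<in>vec.span (u ` S) - {0}. f w)"
      by (rule sum.remove[OF finspan vec.span_zero])
    also have "vec.span (u ` S) - {0} \<subseteq> Lin u ` C0"
    proof
      fix w assume w: "w \<in> vec.span (u ` S) - {0}"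
      then obtain c' where c': "w = Lin u c'" using span_sub[OF finS, of u] by (auto simp: Lin_def)
      define c where "c = restrict c' S"
      have "Lin u c = Lin u c'" unfolding Lin_def c_def by (rule sum.cong) auto
      moreover have "c \<in> C" by (simp add: C_def c_def)
      moreover have "c \<noteq> z"
      proof
        assume "c = z"
        then have "Lin u c = 0" unfolding Lin_def z_def by (intro sum.neutral) auto
        then show False using w c' \<open>Lin u c = Lin u c'\<close> by simp
      qed
      ultimately show "w \<in> Lin u ` C0" using c' unfolding C0_def by (metis DiffI image_eqI singletonD)
    qed
    then have "(\<Sum>w\<in>vec.span (u ` S) - {0}. f w) \<le> (\<Sum>w\<in>Lin u ` C0. f w)"
      by (intro sum_mono2) (use finC0 f0 in auto)
    also have "\<dots> \<le> (\<Sum>c\<in>C0. (f \<circ> Lin u) c)"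
      by (rule sum_image_le) (use finC0 f0 in auto)
    finally show ?thesis by (simp add: X_def)
  qed
  have key: "(\<Sum>u\<in>PiE S (\<lambda>_. UNIV). P u * X u ^ r) \<le> N ^ r * F ^ (d - 1) * G (r + 1)" for r
  proof (cases "r = 0")
    case True
    have "(\<Sum>u\<in>PiE S (\<lambda>_. UNIV). P u) = (\<Prod>i\<in>S. \<Sum>y\<in>UNIV. f y)"
      using prod_sum_PiE[OF finS, of "\<lambda>_. UNIV" "\<lambda>_ y. f y"] by (simp add: P_def)
    also have "\<dots> = F ^ d" using cS by (simp add: F_def)
    also have "\<dots> = F ^ (d - 1) * G 1" using d1 by (simp add: G_def F_def power_eq_if)
    finally show ?thesis using True by simp
  next
    case False
    have "(\<Sum>u\<in>PiE S (\<lambda>_. UNIV). P u * X u ^ r)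
        \<le> (\<Sum>u\<in>PiE S (\<lambda>_. UNIV). P u * (N ^ (r - 1) * (\<Sum>c\<in>C0. f (Lin u c) ^ r)))"
    proof (rule sum_mono, rule mult_left_mono[OF _ P0])
      fix u
      show "X u ^ r \<le> N ^ (r - 1) * (\<Sum>c\<in>C0. f (Lin u c) ^ r)"
        unfolding X_def cardC0[symmetric]
        by (rule power_mean_nat) (use finC0 f0 False in auto)
    qed
    also have "\<dots> = N ^ (r - 1) * (\<Sum>c\<in>C0. \<Sum>u\<in>PiE S (\<lambda>_. UNIV). P u * f (Lin u c) ^ r)"
      by (simp add: sum_distrib_left sum.swap[of _ C0] mult_ac)
    also have "\<dots> \<le> N ^ (r - 1) * (\<Sum>c\<in>C0. F ^ (d - 1) * G (r + 1))"
    proof (intro mult_left_mono sum_mono)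
      fix c assume c: "c \<in> C0"
      have "\<exists>i0\<in>S. c i0 \<noteq> 0"
      proof (rule ccontr)
        assume "\<not> (\<exists>i0\<in>S. c i0 \<noteq> 0)"
        then have all0: "\<forall>i\<in>S. c i = 0" by simp
        have "c = z"
        proof
          fix i show "c i = z i"
          proof (cases "i \<in> S")
            case True then show ?thesis using all0 by (simp add: z_def)
          next
            case False
            have "c \<in> PiE S (\<lambda>_. UNIV)" using c by (simp add: C0_def C_def)
            then have "c i = undefined" using False by (rule PiE_arb)
            then show ?thesis using False by (simp add: z_def)
          qed
        qed
        then show False using c by (simp add: C0_def)
      qed
      then obtain i0 where i0: "i0 \<in> S" "c i0 \<noteq> 0" by blast
      show "(\<Sum>u\<in>PiE S (\<lambda>_. UNIV). P u * f (Lin u c) ^ r) \<le> F ^ (d - 1) * G (r + 1)"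
        using core[where c=c and r=r, OF f0 finS i0] cS by (simp add: P_def Lin_def F_def G_def)
    qed (use N0 in auto)
    also have "\<dots> = N ^ r * F ^ (d - 1) * G (r + 1)"
      using cardC0 False by (simp add: power_eq_if)
    finally show ?thesis .
  qed
  have "(\<Sum>u\<in>PiE S (\<lambda>_. UNIV). (\<Prod>i\<in>S. f (u i)) * (\<Sum>w\<in>vec.span (u ` S). f w) ^ k)
      \<le> (\<Sum>u\<in>PiE S (\<lambda>_. UNIV). P u * (f 0 + X u) ^ k)"
  proof (rule sum_mono)
    fix u :: "nat \<Rightarrow> 'a^'n"
    show "(\<Prod>i\<in>S. f (u i)) * (\<Sum>w\<in>vec.span (u ` S). f w) ^ k \<le> P u * (f 0 + X u) ^ k"
      unfolding P_def by (intro mult_left_mono power_mono step1 prod_nonneg sum_nonneg) (use f0 in auto)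
  qed
  also have "\<dots> = (\<Sum>u\<in>PiE S (\<lambda>_. UNIV). \<Sum>m\<le>k. real (k choose m) * f 0 ^ m * (P u * X u ^ (k - m)))"
    by (simp add: binomial_ring sum_distrib_left mult_ac)
  also have "\<dots> = (\<Sum>m\<le>k. real (k choose m) * f 0 ^ m * (\<Sum>u\<in>PiE S (\<lambda>_. UNIV). P u * X u ^ (k - m)))"
    by (simp add: sum.swap[of _ "{..k}"] sum_distrib_left)
  also have "\<dots> \<le> (\<Sum>m\<le>k. real (k choose m) * f 0 ^ m * (N ^ (k - m) * F ^ (d - 1) * G (k - m + 1)))"
    by (intro sum_mono mult_left_mono key) (use f0 in auto)
  also have "\<dots> = (\<Sum>m=0..k. real (k choose m) * (real CARD('a) ^ d - 1) ^ (k - m) * f 0 ^ m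
         * (\<Sum>x\<in>UNIV. f x) ^ (d - 1) * (\<Sum>x\<in>UNIV. f x ^ (k - m + 1)))"
    by (simp add: atLeast0AtMost N_def F_def G_def mult_ac)
  finally show ?thesis .
qed

lemma lrnorm_pow:
  fixes f :: "'a::{finite,field}^'n \<Rightarrow> real"
  assumes f0: "\<And>x. f x \<ge> 0" and r1: "r \<ge> 1"
  shows "lrnorm f (real r) ^ r = (\<Sum>x\<in>UNIV. f x ^ r) / real CARD('a) ^ CARD('n)"
proof -
  define Q where "Q = real CARD('a) ^ CARD('n)"
  have Q: "Q > 0" by (simp add: Q_def)
  have e: "(\<Sum>x\<in>UNIV. \<bar>f x\<bar> powr real r) = (\<Sum>x\<in>UNIV. f x ^ r)"
    by (rule sum.cong) (use f0 r1 in \<open>auto simp: powr_realpow'\<close>)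
  define Y where "Y = inverse Q * (\<Sum>x\<in>UNIV. f x ^ r)"
  have Y0: "Y \<ge> 0" using Q f0 by (simp add: Y_def sum_nonneg)
  have "lrnorm f (real r) = Y powr (1 / real r)"
    by (simp add: lrnorm_def e Y_def Q_def)
  then have "lrnorm f (real r) ^ r = (Y powr (1 / real r)) powr (real r)"
    using r1 by (simp add: powr_realpow')
  also have "\<dots> = Y" using r1 Y0 by (simp add: powr_powr)
  finally show ?thesis using Q by (simp add: Y_def Q_def field_simps)
qed

lemma cover:
  fixes v :: "nat \<Rightarrow> 'a::field^'n"
  assumes "tuple_rank p v = d"
  shows "\<exists>S. S \<subseteq> {..<p} \<and> card S = d \<and> (\<forall>j<p. v j \<in> vec.span (v ` S))"
proof -
  obtain B where B: "B \<subseteq> v ` {..<p}" "v ` {..<p} \<subseteq> vec.span B" "card B = vec.dim (v ` {..<p})"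
    using vec.basis_exists by metis
  define S where "S = inv_into {..<p} v ` B"
  have "inv_into {..<p} v x \<in> {..<p}" if "x \<in> B" for x using that B(1) by (intro inv_into_into) auto
  then have "S \<subseteq> {..<p}" by (auto simp: S_def)
  moreover have "card S = d"
    unfolding S_def using B assms
    by (subst card_image) (auto simp: tuple_rank_def intro: inj_on_inv_into)
  moreover have "v ` S = B" unfolding S_def by (rule image_inv_into_cancel[OF refl B(1)])
  ultimately show ?thesis using B(2) by auto
qed

theorem lemma3p5:
  fixes f :: "'a::{finite,field} ^ 'n \<Rightarrow> real"
    and p d :: nat
  assumes "p \<ge> 2" and "1 \<le> d" and "d < p"
    and "\<And>x. f x \<ge> 0"
  shows "(\<Sum>v \<in> {v \<in> (PiE {..<p} (\<lambda>_. UNIV)). tuple_rank p v = d}. \<Prod>j<p. f (v j))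
     \<le> real (p choose d) *
        (\<Sum>m = 0..p - d. real ((p - d) choose m) * (real CARD('a) ^ d - 1) ^ (p - d - m)
            * real CARD('a) ^ (CARD('n) * d) * f 0 ^ m * lrnorm f 1 ^ (d - 1)
            * lrnorm f (real (p - d - m + 1)) ^ (p - d - m + 1))"
proof -
  note f0 = assms(4)
  define k where "k = p - d"
  define U :: "(nat \<Rightarrow> 'a^'n) set" where "U = PiE {..<p} (\<lambda>_. UNIV)"
  define R where "R = {v \<in> U. tuple_rank p v = d}"
  define Ss where "Ss = {S. S \<subseteq> {..<p} \<and> card S = d}"
  define A where "A = (\<lambda>S. {v\<in>U. \<forall>j<p. v j \<in> vec.span (v ` S)})"
  define g where "g = (\<lambda>v::nat \<Rightarrow> 'a^'n. \<Prod>j<p. f (v j))"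
  define F where "F = (\<Sum>x\<in>UNIV. f x)"
  define G where "G = (\<lambda>r. \<Sum>x\<in>UNIV. f x ^ r)"
  define Bd where "Bd = (\<Sum>m=0..k. real (k choose m) * (real CARD('a) ^ d - 1) ^ (k - m) * f 0 ^ m
         * F ^ (d - 1) * G (k - m + 1))"
  have g0: "g v \<ge> 0" for v using f0 by (simp add: g_def prod_nonneg)
  have finU: "finite U" unfolding U_def by (intro finite_PiE) auto
  have finSs: "finite Ss" unfolding Ss_def by (rule finite_subset[of _ "Pow {..<p}"]) auto
  have "(\<Sum>v\<in>R. g v) \<le> (\<Sum>v\<in>R. \<Sum>S\<in>Ss. if v \<in> A S then g v else 0)"
  proof (rule sum_mono)
    fix v assume v: "v \<in> R"
    then obtain S where S: "S \<subseteq> {..<p}" "card S = d" "\<forall>j<p. v j \<in> vec.span (v ` S)"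
      using cover[of p v d] by (auto simp: R_def)
    have "S \<in> Ss" "v \<in> A S" using S v by (auto simp: Ss_def A_def R_def)
    then show "g v \<le> (\<Sum>S\<in>Ss. if v \<in> A S then g v else 0)"
      using member_le_sum[of S Ss "\<lambda>S. if v \<in> A S then g v else 0"] finSs g0 by auto
  qed
  also have "\<dots> = (\<Sum>S\<in>Ss. \<Sum>v\<in>R. if v \<in> A S then g v else 0)" by (rule sum.swap)
  also have "\<dots> \<le> (\<Sum>S\<in>Ss. Bd)"
  proof (rule sum_mono)
    fix S assume S: "S \<in> Ss"
    have "(\<Sum>v\<in>R. if v \<in> A S then g v else 0) \<le> (\<Sum>v\<in>U. if v \<in> A S then g v else 0)"
      by (rule sum_mono2) (use finU g0 in \<open>auto simp: R_def\<close>)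
    also have "\<dots> = (\<Sum>v\<in>U \<inter> A S. g v)" by (rule sum.inter_restrict[symmetric, OF finU])
    also have "U \<inter> A S = A S" by (auto simp: A_def)
    also have "(\<Sum>v\<in>A S. g v) \<le> (\<Sum>u\<in>PiE S (\<lambda>_. UNIV). (\<Prod>i\<in>S. f (u i)) * (\<Sum>w\<in>vec.span (u ` S). f w) ^ (p - card S))"
      using factor[OF f0, where S=S and p=p] S by (simp add: A_def U_def g_def Ss_def)
    also have "\<dots> \<le> Bd"
      using perS[OF f0, where S=S and d=d and k=k] S assms(2) finite_subset[of S "{..<p}"]
      by (simp add: Ss_def k_def Bd_def F_def G_def)
    finally show "(\<Sum>v\<in>R. if v \<in> A S then g v else 0) \<le> Bd" .
  qed
  also have "\<dots> = real (p choose d) * Bd"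
    using n_subsets[of "{..<p}" d] by (simp add: Ss_def)
  finally have main: "(\<Sum>v\<in>R. g v) \<le> real (p choose d) * Bd" .
  have Q: "real CARD('a) ^ CARD('n) > 0" by simp
  have L1: "lrnorm f 1 = F / real CARD('a) ^ CARD('n)"
    using lrnorm_pow[OF f0, of 1] by (simp add: F_def)
  have "Bd = (\<Sum>m = 0..p - d. real ((p - d) choose m) * (real CARD('a) ^ d - 1) ^ (p - d - m)
            * real CARD('a) ^ (CARD('n) * d) * f 0 ^ m * lrnorm f 1 ^ (d - 1)
            * lrnorm f (real (p - d - m + 1)) ^ (p - d - m + 1))"
    unfolding Bd_def k_def
  proof (rule sum.cong[OF refl])
    fix m
    have Lr: "lrnorm f (real (p - d - m + 1)) ^ (p - d - m + 1) = G (p - d - m + 1) / real CARD('a) ^ CARD('n)"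
      using lrnorm_pow[OF f0, of "p - d - m + 1"] by (simp add: G_def)
    have QQ: "real CARD('a) ^ (CARD('n) * d) = (real CARD('a) ^ CARD('n)) ^ (d - 1) * real CARD('a) ^ CARD('n)"
    proof -
      have "CARD('n) * d = CARD('n) * (d - 1) + CARD('n)" using assms(2) by (cases d) auto
      then show ?thesis by (simp only: power_add power_mult)
    qed
    show "real ((p - d) choose m) * (real CARD('a) ^ d - 1) ^ (p - d - m) * f 0 ^ m * F ^ (d - 1) * G (p - d - m + 1) =
          real ((p - d) choose m) * (real CARD('a) ^ d - 1) ^ (p - d - m)
            * real CARD('a) ^ (CARD('n) * d) * f 0 ^ m * lrnorm f 1 ^ (d - 1)
            * lrnorm f (real (p - d - m + 1)) ^ (p - d - m + 1)"
      unfolding Lr L1 QQ using Q by (simp add: power_divide field_simps)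
  qed
  with main show ?thesis by (simp add: R_def U_def g_def)
qed

end
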